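(* Let $C\ge 2$ and let $w^*_{1},\dots,w^*_{C}\in\mathbb{R}^d/\mathbb{R}\mathbf{1}$ (one weight vector per class). Let $$\mathcal{B}=\{x\in\mathbb{R}^d/\mathbb{R}\mathbf{1}:\ d_{\rm tr}(x,-w^*_{j})=d_{\rm tr}(x,-w^*_{j'})\text{ for some } j\neq j'\}.$$ Then $\mathcal{B}$ contains no full-dimensional cell (i.e. has empty interior in $\mathbb{R}^d/\mathbb{R}\mathbf{1}\cong\mathbb{R}^{d-1}$) if and only if for all $i\neq j$ in $[C]$ the pair $w^*_i,w^*_j$ is in weak general position.
   Context: The tropical projective torus is $\mathbb{R}^d/\mathbb{R}\mathbf{1}$, $\mathbf{1}=(1,\dots,1)$, identified with $\mathbb{R}^{d-1}$ via $x\mapsto(x_2-x_1,\dots,x_d-x_1)$. Tropical metric: $d_{\rm tr}(x,y)=\max_{i}(x_i-y_i)-\min_i(x_i-y_i)$. A pair of points $p,q\in\mathbb{R}^d/\mathbb{R}\mathbf{1}$ is in weak general position (with respect to the tropical ball) if they do not lie in a common hyperplane parallel to a facet of a tropical ball $\{y:d_{\rm tr}(x,y)\le r\}$, i.e. $p_a-p_b\neq q_a-q_b$ for all $a\neq b$ in $[d]$. $[C]=\{1,\dots,C\}$. *)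

theory Defs
  imports "HOL-Analysis.Analysis"
begin

text \<open>Points of R^d are vectors indexed by the finite type 'm option, so
  d = CARD('m) + 1 >= 2; coordinate None plays the role of the first coordinate.\<close>

definition tdist :: "real ^ 'd::finite \<Rightarrow> real ^ 'd \<Rightarrow> real" where
  "tdist x y = (MAX i. x $ i - y $ i) - (MIN i. x $ i - y $ i)"

text \<open>Inverse of the identification R^d / R1 -> R^(d-1), x |-> (x_i - x_1)_{i>1}:
  the representative with first coordinate 0.\<close>
definition lift :: "real ^ 'm::finite \<Rightarrow> real ^ ('m option)" where
  "lift y = (\<chi> i. case i of None \<Rightarrow> 0 | Some k \<Rightarrow> y $ k)"

definition weak_gen_pos :: "real ^ 'd::finite \<Rightarrow> real ^ 'd \<Rightarrow> bool" where
  "weak_gen_pos p q \<longleftrightarrow> (\<forall>a b. a \<noteq> b \<longrightarrow> p $ a - p $ b \<noteq> q $ a - q $ b)"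

definition boundary_set :: "nat \<Rightarrow> (nat \<Rightarrow> real ^ ('m::finite option)) \<Rightarrow> (real ^ 'm) set" where
  "boundary_set C w = {y. \<exists>j\<in>{1..C}. \<exists>j'\<in>{1..C}. j \<noteq> j' \<and>
      tdist (lift y) (- w j) = tdist (lift y) (- w j')}"

end

theory Submission imports Defs begin

lemma max_at: fixes f :: "'d::finite \<Rightarrow> real"
  assumes "\<And>k. f k \<le> f a" shows "(MAX i. f i) = f a"
  by (rule Max_eqI) (use assms in auto)

lemma min_at: fixes f :: "'d::finite \<Rightarrow> real"
  assumes "\<And>k. f a \<le> f k" shows "(MIN i. f i) = f a"
  by (rule Min_eqI) (use assms in auto)

lemma max_ex: fixes f :: "'d::finite \<Rightarrow> real"
  shows "\<exists>a. (MAX i. f i) = f a \<and> (\<forall>k. f k \<le> f a)"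
proof -
  have "(MAX i. f i) \<in> range f" by (rule Max_in) auto
  then obtain a where "(MAX i. f i) = f a" by (metis imageE)
  moreover have "\<forall>k. f k \<le> (MAX i. f i)" by (auto intro: Max_ge)
  ultimately show ?thesis by metis
qed

lemma min_ex: fixes f :: "'d::finite \<Rightarrow> real"
  shows "\<exists>a. (MIN i. f i) = f a \<and> (\<forall>k. f a \<le> f k)"
proof -
  have "(MIN i. f i) \<in> range f" by (rule Min_in) auto
  then obtain a where "(MIN i. f i) = f a" by (metis imageE)
  moreover have "\<forall>k. (MIN i. f i) \<le> f k" by (auto intro: Min_le)
  ultimately show ?thesis by metis
qed

lemma tdist_neg: "tdist x (- u) = (MAX i. x $ i + u $ i) - (MIN i. x $ i + u $ i)"
  by (simp add: tdist_def)

definition F :: "'d \<Rightarrow> 'd \<Rightarrow> 'd \<Rightarrow> 'd \<Rightarrow> real ^ 'd::finite \<Rightarrow> real" where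
  "F a b c e x = x$a - x$b - x$c + x$e"

lemma pointwise:
  fixes x u v :: "real ^ ('m::finite option)"
  assumes wg: "weak_gen_pos u v" and eq: "tdist x (- u) = tdist x (- v)"
  shows "\<exists>a b c e. (\<exists>z. F a b c e z \<noteq> 0) \<and> F a b c e x = (v$c - v$e) - (u$a - u$b)"
proof -
  obtain a where a: "(MAX i. x $ i + u $ i) = x$a + u$a" "\<forall>k. x$k + u$k \<le> x$a + u$a"
    using max_ex[of "\<lambda>i. x $ i + u $ i"] by auto
  obtain b where b: "(MIN i. x $ i + u $ i) = x$b + u$b" "\<forall>k. x$b + u$b \<le> x$k + u$k"
    using min_ex[of "\<lambda>i. x $ i + u $ i"] by auto
  obtain c where c: "(MAX i. x $ i + v $ i) = x$c + v$c" "\<forall>k. x$k + v$k \<le> x$c + v$c"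
    using max_ex[of "\<lambda>i. x $ i + v $ i"] by auto
  obtain e where e: "(MIN i. x $ i + v $ i) = x$e + v$e" "\<forall>k. x$e + v$e \<le> x$k + v$k"
    using min_ex[of "\<lambda>i. x $ i + v $ i"] by auto
  have E: "x$a + u$a - (x$b + u$b) = x$c + v$c - (x$e + v$e)"
    using eq a b c e by (simp add: tdist_neg)
  have "\<exists>z. F a b c e z \<noteq> 0"
  proof (rule ccontr)
    assume "\<not> ?thesis"
    then have Z: "\<And>z. F a b c e z = 0" by auto
    define ind :: "'m option \<Rightarrow> real ^ 'm option" where "ind t = (\<chi> i. if i = t then 1 else 0)" for t
    have za: "F a b c e (ind a) = 0" and zb: "F a b c e (ind b) = 0"
      and zc: "F a b c e (ind c) = 0" and ze: "F a b c e (ind e) = 0" using Z by auto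
    show False
    proof (cases "a = b")
      case True
      then have ce: "c = e" using zc by (auto simp: F_def ind_def split: if_splits)
      have cu: "\<And>k. x$k + u$k = x$a + u$a" using a b True by (metis order.antisym)
      have cv: "\<And>k. x$k + v$k = x$c + v$c" using c e ce by (metis order.antisym)
      have "weak_gen_pos u v" by fact
      then have "u$None - u$(Some undefined) \<noteq> v$None - v$(Some undefined)"
        unfolding weak_gen_pos_def by auto
      moreover have "u$None - u$(Some undefined) = v$None - v$(Some undefined)"
        using cu[of None] cu[of "Some undefined"] cv[of None] cv[of "Some undefined"] by linarith
      ultimately show False by auto
    next
      case False
      then have "c = a" "e \<noteq> a" using za by (auto simp: F_def ind_def split: if_splits)
      then have "e = b" using zb False by (auto simp: F_def ind_def split: if_splits)
      then have "u$a - u$b = v$a - v$b" using E \<open>c = a\<close> by simp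
      then show False using wg False unfolding weak_gen_pos_def by auto
    qed
  qed
  moreover have "F a b c e x = (v$c - v$e) - (u$a - u$b)" using E by (simp add: F_def)
  ultimately show ?thesis by blast
qed


definition la :: "'m option \<Rightarrow> real ^ 'm::finite" where
  "la a = (case a of None \<Rightarrow> 0 | Some k \<Rightarrow> axis k 1)"

lemma lift_inner: "lift y $ a = la a \<bullet> y"
  by (cases a) (simp_all add: lift_def la_def inner_axis inner_commute)

lemma negl:
  fixes a b c e :: "'m::finite option"
  assumes "\<exists>z. F a b c e z \<noteq> 0"
  shows "negligible {y :: real ^ 'm. F a b c e (lift y) = r}"
proof -
  define g where "g = la a - la b - la c + la e"
  have G: "F a b c e (lift y) = g \<bullet> y" for y
    by (simp add: F_def lift_inner g_def inner_diff_left inner_add_left)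
  obtain z where z: "F a b c e z \<noteq> 0" using assms by auto
  define yz :: "real ^ 'm" where "yz = (\<chi> k. z$Some k - z$None)"
  have "lift yz $ i = z$i - z$None" for i
    by (cases i) (simp_all add: lift_def yz_def)
  then have "F a b c e (lift yz) = F a b c e z" by (simp add: F_def)
  then have "g \<noteq> 0" using z G by force
  then have "negligible {y. g \<bullet> y = r}" by (intro negligible_hyperplane) auto
  then show ?thesis using G by simp
qed


lemma hard:
  fixes C :: nat and w :: "nat \<Rightarrow> real ^ ('m::finite option)"
  assumes wg: "\<forall>i\<in>{1..C}. \<forall>j\<in>{1..C}. i \<noteq> j \<longrightarrow> weak_gen_pos (w i) (w j)"
  shows "interior (boundary_set C w) = {}"
proof -
  define S where "S = {(i,j,a,b,c,e). i \<in> {1..C} \<and> j \<in> {1..C} \<and> i \<noteq> j \<and>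
     (\<exists>z :: real ^ 'm option. F a b c e z \<noteq> 0)}"
  define H where "H = (\<lambda>(i,j,a,b,c,e). {y :: real ^ 'm. F a b c e (lift y) =
      (w j $ c - w j $ e) - (w i $ a - w i $ b)})"
  have finS: "finite S"
  proof (rule finite_subset)
    show "S \<subseteq> {1..C} \<times> {1..C} \<times> (UNIV :: ('m option \<times> 'm option \<times> 'm option \<times> 'm option) set)"
      by (auto simp: S_def)
  qed simp
  have sub: "boundary_set C w \<subseteq> \<Union> (H ` S)"
  proof
    fix y assume "y \<in> boundary_set C w"
    then obtain i j where ij: "i \<in> {1..C}" "j \<in> {1..C}" "i \<noteq> j"
      "tdist (lift y) (- w i) = tdist (lift y) (- w j)" by (auto simp: boundary_set_def)
    from pointwise[OF _ ij(4)] wg ij obtain a b c e where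
      "\<exists>z. F a b c e z \<noteq> 0" "F a b c e (lift y) = (w j $ c - w j $ e) - (w i $ a - w i $ b)"
      by blast
    then have "(i,j,a,b,c,e) \<in> S" "y \<in> H (i,j,a,b,c,e)" using ij
      by (auto simp: S_def H_def)
    then show "y \<in> \<Union> (H ` S)" by blast
  qed
  have "negligible (\<Union> (H ` S))"
    by (rule negligible_Union) (use finS in \<open>auto simp: S_def H_def intro!: negl\<close>)
  then have "negligible (interior (boundary_set C w))"
    by (rule negligible_subset) (use sub interior_subset in blast)
  then show ?thesis using open_not_negligible open_interior by blast
qed


lemma easy:
  fixes C :: nat and w :: "nat \<Rightarrow> real ^ ('m::finite option)"
  assumes ij: "i \<in> {1..C}" "j \<in> {1..C}" "i \<noteq> j" and ng: "\<not> weak_gen_pos (w i) (w j)"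
  shows "interior (boundary_set C w) \<noteq> {}"
proof -
  define u where "u = w i"
  define v where "v = w j"
  obtain a b where ab: "a \<noteq> b" "u$a - u$b = v$a - v$b"
    using ng unfolding weak_gen_pos_def u_def v_def by auto
  define B where "B = (\<Sum>k\<in>UNIV. \<bar>u$k\<bar> + \<bar>v$k\<bar>)"
  have Bu: "\<bar>u$k\<bar> \<le> B" and Bv: "\<bar>v$k\<bar> \<le> B" for k
  proof -
    have "\<bar>u$k\<bar> + \<bar>v$k\<bar> \<le> B" unfolding B_def
      by (rule member_le_sum) auto
    then show "\<bar>u$k\<bar> \<le> B" "\<bar>v$k\<bar> \<le> B" by auto
  qed
  define M where "M = 2*B + 3"
  have B0: "B \<ge> 0" using Bu[of a] by simp
  define x0 :: "real ^ 'm option" where "x0 = (\<chi> k. if k = a then M else if k = b then -M else 0)"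
  define y0 :: "real ^ 'm" where "y0 = (\<chi> k. x0$Some k - x0$None)"
  have ly0: "lift y0 $ k = x0$k - x0$None" for k
    by (cases k) (simp_all add: lift_def y0_def)
  have close: "\<bar>lift y $ k - lift y0 $ k\<bar> < 1" if "y \<in> ball y0 1" for y k
  proof (cases k)
    case None then show ?thesis by (simp add: lift_def)
  next
    case (Some k')
    have "\<bar>(y - y0) $ k'\<bar> \<le> norm (y - y0)" by (rule component_le_norm_cart)
    also have "\<dots> < 1" using that by (simp add: dist_norm norm_minus_commute)
    finally show ?thesis using Some by (simp add: lift_def)
  qed
  have "ball y0 1 \<subseteq> boundary_set C w"
  proof
    fix y assume y: "y \<in> ball y0 1"
    define x where "x = lift y"
    have cl: "\<bar>x$k - (x0$k - x0$None)\<bar> < 1" for k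
      using close[OF y, of k] ly0[of k] by (simp add: x_def)
    have x0a: "x0$a = M" and x0b: "x0$b = -M" using ab(1) by (auto simp: x0_def)
    have x0k: "-M \<le> x0$k \<and> x0$k \<le> M" for k using B0 by (auto simp: x0_def M_def)
    have x0k2: "k \<noteq> a \<Longrightarrow> x0$k \<le> 0" "k \<noteq> b \<Longrightarrow> x0$k \<ge> 0" for k
      using B0 by (auto simp: x0_def M_def)
    have mx: "x$k + z$k \<le> x$a + z$a" if "\<And>k. \<bar>z$k\<bar> \<le> B" for z k
    proof (cases "k = a")
      case False
      have "x$a - x$k \<ge> x0$a - x0$k - 2" using cl[of a] cl[of k] by linarith
      moreover have "x0$a - x0$k \<ge> M" using x0a x0k2(1)[OF False] by linarith
      ultimately show ?thesis using that[of k] that[of a] by (auto simp: M_def abs_le_iff)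
    qed simp
    have mn: "x$b + z$b \<le> x$k + z$k" if "\<And>k. \<bar>z$k\<bar> \<le> B" for z k
    proof (cases "k = b")
      case False
      have "x$k - x$b \<ge> x0$k - x0$b - 2" using cl[of b] cl[of k] by linarith
      moreover have "x0$k - x0$b \<ge> M" using x0b x0k2(2)[OF False] by linarith
      ultimately show ?thesis using that[of k] that[of b] by (auto simp: M_def abs_le_iff)
    qed simp
    have "(MAX k. x$k + u$k) = x$a + u$a" by (rule max_at) (rule mx[OF Bu])
    moreover have "(MIN k. x$k + u$k) = x$b + u$b" by (rule min_at) (rule mn[OF Bu])
    moreover have "(MAX k. x$k + v$k) = x$a + v$a" by (rule max_at) (rule mx[OF Bv])
    moreover have "(MIN k. x$k + v$k) = x$b + v$b" by (rule min_at) (rule mn[OF Bv])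
    ultimately have "tdist x (- u) = tdist x (- v)" using ab(2) by (simp add: tdist_neg)
    then show "y \<in> boundary_set C w" using ij unfolding boundary_set_def x_def u_def v_def
      by blast
  qed
  then have "y0 \<in> interior (boundary_set C w)"
    by (meson centre_in_ball interior_maximal open_ball zero_less_one subsetD)
  then show ?thesis by auto
qed

theorem mainTheorem3:
  fixes C :: nat and w :: "nat \<Rightarrow> real ^ ('m::finite option)"
  assumes "C \<ge> 2"
  shows "interior (boundary_set C w) = {} \<longleftrightarrow>
         (\<forall>i\<in>{1..C}. \<forall>j\<in>{1..C}. i \<noteq> j \<longrightarrow> weak_gen_pos (w i) (w j))"
  using hard easy by blast

end
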